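(* Let $n\in\mathbb{N}$ with $n\ge 2$ and define $$\alpha:=\frac{n+\sqrt{n^2+4}}{2},\qquad \gamma:=\frac1\alpha,\qquad \tau:=\frac{\log\alpha}{\log n}.$$ Then $\alpha\in D_{\gamma,\tau}$ and $\alpha$ is an isolated point of $D_{\gamma,\tau}$ (i.e. there is an open interval containing $\alpha$ whose intersection with $D_{\gamma,\tau}$ is $\{\alpha\}$).
   Context: For $\gamma>0$ and $\tau\ge 1$, the Diophantine set $D_{\gamma,\tau}$ is the set of all real numbers $\xi$ such that $|\xi q-p|\ge \gamma/q^{\tau}$ for all $p\in\mathbb{Z}$ and all $q\in\mathbb{N}=\{1,2,3,\dots\}$. *)

theory Defs
  imports "HOL-Analysis.Analysis"
begin

definition diophantine_set :: "real \<Rightarrow> real \<Rightarrow> real set" where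
  "diophantine_set \<gamma> \<tau> =
     {\<xi>. \<forall>p::int. \<forall>q::nat. q \<ge> 1 \<longrightarrow> \<bar>\<xi> * real q - real_of_int p\<bar> \<ge> \<gamma> / (real q powr \<tau>)}"

end

theory Submission
  imports Defs
begin

lemma key_bound:
  fixes n :: nat and a t :: real
  assumes n2: "n \<ge> 2" and sq: "a * a = real n * a + 1" and an: "a > real n"
    and pw: "real n powr t = a" and t0: "t \<ge> 0"
  shows "\<forall>p::int. 1 \<le> q \<longrightarrow> \<bar>a * real q - real_of_int p\<bar> \<ge> 1 / (a * real q powr t)"
proof (induction q rule: less_induct)
  case (less q)
  show ?case
  proof (intro allI impI)
    fix p :: int assume q1: "1 \<le> q"
    have apos: "a > 0" using an by linarith
    have inv: "a - real n = 1 / a" using sq apos by (simp add: field_simps)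
    have qp1: "real q powr t \<ge> 1" using q1 t0 by (simp add: ge_one_powr_ge_zero)
    have rhs: "1 / (a * real q powr t) \<le> 1 / a"
    proof -
      have "a * 1 \<le> a * real q powr t" using qp1 apos by (intro mult_left_mono) auto
      moreover have "a * real q powr t > 0" using apos qp1 q1 by (intro mult_pos_pos) auto
      ultimately show ?thesis using apos by (intro divide_left_mono) (auto intro!: mult_pos_pos)
    qed
    define q' where "q' = p - int n * int q"
    consider (A) "q' \<le> 0" | (B) "int n * q' \<ge> int q + 1" | (C) "1 \<le> q'" "int n * q' \<le> int q"
      by linarith
    then show "\<bar>a * real q - real_of_int p\<bar> \<ge> 1 / (a * real q powr t)"
    proof cases
      case A
      hence "p \<le> int n * int q" unfolding q'_def by linarith
      hence "real_of_int p \<le> real_of_int (int n * int q)" by (simp only: of_int_le_iff)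
      hence "real_of_int p \<le> real n * real q" by simp
      hence "a * real q - real_of_int p \<ge> (a - real n) * real q" by (simp add: algebra_simps)
      moreover have "(a - real n) * real q \<ge> (a - real n)" using q1 an by simp
      ultimately have "\<bar>a * real q - real_of_int p\<bar> \<ge> 1 / a" using inv by linarith
      thus ?thesis using rhs by linarith
    next
      case B
      hence "real_of_int (int n * q') \<ge> real_of_int (int q + 1)" by (simp only: of_int_le_iff)
      hence "real n * (real_of_int p - real n * real q) \<ge> real q + 1"
        unfolding q'_def by simp
      hence h: "real_of_int p - real n * real q \<ge> (real q + 1) / real n"
        using n2 by (simp add: field_simps)
      have "(real q + 1) / real n \<ge> (real q + 1) / a"
        using n2 an by (intro divide_left_mono) auto
      hence "real_of_int p - a * real q \<ge> (real q + 1) / a - real q * (a - real n)"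
        using h by (simp add: algebra_simps)
      also have "(real q + 1) / a - real q * (a - real n) = (real q + 1) / a - real q * (1 / a)"
        by (simp only: inv)
      also have "\<dots> = 1 / a" using apos by (simp add: field_simps)
      finally have "\<bar>a * real q - real_of_int p\<bar> \<ge> 1 / a" by linarith
      thus ?thesis using rhs by linarith
    next
      case C
      define m where "m = nat q'"
      have mq: "real m = real_of_int q'" using C m_def by simp
      have m1: "1 \<le> m" using C m_def by simp
      have "real_of_int (int n * q') \<le> real_of_int (int q)" using C(2) by (simp only: of_int_le_iff)
      hence nm: "real n * real m \<le> real q" using mq by simp
      have "2 * real m \<le> real n * real m" using n2 by (intro mult_right_mono) auto
      hence "real m < real q" using nm m1 by linarith
      hence "m < q" by simp
      hence IH: "\<bar>a * real m - real_of_int (int q)\<bar> \<ge> 1 / (a * real m powr t)"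
        using less m1 by blast
      have pe: "real_of_int p = real m + real n * real q" using mq unfolding q'_def by simp
      have "a * (a * real q - real_of_int p) = a * a * real q - a * real m - a * real n * real q"
        by (simp add: pe algebra_simps)
      also have "\<dots> = (real n * a + 1) * real q - a * real m - a * real n * real q" using sq by simp
      also have "\<dots> = - (a * real m - real q)" by (simp add: algebra_simps)
      finally have ident: "a * (a * real q - real_of_int p) = - (a * real m - real q)" .
      have "\<bar>a * (a * real q - real_of_int p)\<bar> = \<bar>- (a * real m - real q)\<bar>" by (simp only: ident)
      hence "a * \<bar>a * real q - real_of_int p\<bar> = \<bar>a * real m - real q\<bar>"
        using apos by (simp add: abs_mult)
      hence eq: "\<bar>a * real q - real_of_int p\<bar> = \<bar>a * real m - real q\<bar> / a"
        using apos by (simp add: field_simps)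
      have mp: "real m powr t > 0" using m1 by simp
      have "real q powr t \<ge> (real n * real m) powr t"
        using nm t0 by (intro powr_mono2) auto
      also have "(real n * real m) powr t = a * real m powr t"
        using pw by (simp add: powr_mult)
      finally have qq: "real q powr t \<ge> a * real m powr t" .
      have "1 / (a * real q powr t) \<le> 1 / (a * (a * real m powr t))"
        using qq apos mp q1 by (intro divide_left_mono mult_left_mono mult_pos_pos) auto
      also have "\<dots> = (1 / (a * real m powr t)) / a" by simp
      also have "\<dots> \<le> \<bar>a * real m - real q\<bar> / a"
        using IH apos by (intro divide_right_mono) auto
      finally show ?thesis using eq by simp
    qed
  qed
qed

theorem theorem1:
  fixes n :: nat and \<alpha> \<gamma> \<tau> :: real
  assumes "n \<ge> 2"
    and "\<alpha> = (real n + sqrt (real n ^ 2 + 4)) / 2"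
    and "\<gamma> = 1 / \<alpha>"
    and "\<tau> = ln \<alpha> / ln (real n)"
  shows "\<alpha> \<in> diophantine_set \<gamma> \<tau> \<and>
         (\<exists>a b. a < \<alpha> \<and> \<alpha> < b \<and> {a<..<b} \<inter> diophantine_set \<gamma> \<tau> = {\<alpha>})"
proof -
  have n2: "real n \<ge> 2" using assms(1) by simp
  have s: "sqrt (real n ^ 2 + 4) > real n"
    using n2 by (intro real_less_rsqrt) simp
  have ss: "sqrt (real n ^ 2 + 4) ^ 2 = real n ^ 2 + 4" by simp
  have an: "\<alpha> > real n" using s assms(2) by simp
  have apos: "\<alpha> > 0" using an n2 by linarith
  have sq: "\<alpha> * \<alpha> = real n * \<alpha> + 1"
    using ss unfolding assms(2) by (simp add: power2_eq_square algebra_simps)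
  have t0: "\<tau> \<ge> 0" using assms(4) an n2 by simp
  have pw: "real n powr \<tau> = \<alpha>"
    using assms(4) an n2 by (simp add: powr_def)
  have inv: "\<alpha> - real n = 1 / \<alpha>" using sq apos by (simp add: field_simps)
  have mem: "\<alpha> \<in> diophantine_set \<gamma> \<tau>"
    unfolding diophantine_set_def
  proof (safe)
    fix p :: int and q :: nat assume "1 \<le> q"
    thus "\<gamma> / real q powr \<tau> \<le> \<bar>\<alpha> * real q - real_of_int p\<bar>"
      using key_bound[OF assms(1) sq an pw t0, of q] assms(3) by simp
  qed
  have iso: "{real n<..<\<alpha> + 1 / (real n * \<alpha> * \<alpha>)} \<inter> diophantine_set \<gamma> \<tau> = {\<alpha>}"
  proof (rule antisym)
    have "\<alpha> < \<alpha> + 1 / (real n * \<alpha> * \<alpha>)" using apos n2 by simp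
    thus "{\<alpha>} \<subseteq> {real n<..<\<alpha> + 1 / (real n * \<alpha> * \<alpha>)} \<inter> diophantine_set \<gamma> \<tau>"
      using mem an by auto
  next
    show "{real n<..<\<alpha> + 1 / (real n * \<alpha> * \<alpha>)} \<inter> diophantine_set \<gamma> \<tau> \<subseteq> {\<alpha>}"
    proof
    fix x assume xx: "x \<in> {real n<..<\<alpha> + 1 / (real n * \<alpha> * \<alpha>)} \<inter> diophantine_set \<gamma> \<tau>"
    hence x1: "real n < x" and x2: "x < \<alpha> + 1 / (real n * \<alpha> * \<alpha>)"
      and xd: "x \<in> diophantine_set \<gamma> \<tau>" by auto
    have c1: "\<gamma> / real 1 powr \<tau> \<le> \<bar>x * real 1 - real_of_int (int n)\<bar>"
      using xd unfolding diophantine_set_def by blast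
    hence "1 / \<alpha> \<le> x - real n" using x1 assms(3) by simp
    hence xa: "x \<ge> \<alpha>" using inv by linarith
    have c2: "\<gamma> / real n powr \<tau> \<le> \<bar>x * real n - real_of_int (int n * int n + 1)\<bar>"
    proof -
      have "\<forall>p::int. \<forall>q::nat. q \<ge> 1 \<longrightarrow> \<bar>x * real q - real_of_int p\<bar> \<ge> \<gamma> / (real q powr \<tau>)"
        using xd unfolding diophantine_set_def by blast
      hence "n \<ge> 1 \<longrightarrow> \<bar>x * real n - real_of_int (int n * int n + 1)\<bar> \<ge> \<gamma> / (real n powr \<tau>)" by blast
      thus ?thesis using assms(1) by simp
    qed
    have e: "x * real n - real_of_int (int n * int n + 1) = real n * (x - \<alpha>) - 1 / (\<alpha> * \<alpha>)"
    proof -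
      have "real n * \<alpha> - real n * real n - 1 = real n * (\<alpha> - real n) - 1" by (simp add: algebra_simps)
      also have "\<dots> = real n * (1 / \<alpha>) - 1" by (simp only: inv)
      also have "\<dots> = - ((\<alpha> - real n) / \<alpha>)" using apos by (simp add: field_simps)
      also have "\<dots> = - (1 / \<alpha>) / \<alpha>" by (simp only: inv)
      finally have "real n * \<alpha> - real n * real n - 1 = - 1 / (\<alpha> * \<alpha>)" by simp
      thus ?thesis by (simp add: algebra_simps)
    qed
    have "real n * (x - \<alpha>) < real n * (1 / (real n * \<alpha> * \<alpha>))"
      using x2 n2 by (intro mult_strict_left_mono) auto
    also have "\<dots> = 1 / (\<alpha> * \<alpha>)" using n2 by simp
    finally have lt: "real n * (x - \<alpha>) < 1 / (\<alpha> * \<alpha>)" .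
    have "1 / (\<alpha> * \<alpha>) \<le> \<bar>real n * (x - \<alpha>) - 1 / (\<alpha> * \<alpha>)\<bar>"
      using c2 e pw assms(3) by simp
    hence "real n * (x - \<alpha>) \<le> 0" using lt xa n2 by (simp add: abs_if split: if_splits)
    hence "x - \<alpha> \<le> 0" using n2 by (simp add: mult_le_0_iff)
    thus "x \<in> {\<alpha>}" using xa by simp
  qed
  qed
  show ?thesis using mem iso an apos n2
    by (intro conjI exI[of _ "real n"] exI[of _ "\<alpha> + 1 / (real n * \<alpha> * \<alpha>)"]) auto
qed

end
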